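(* For every fixed $n\ge1$, the function $f(x)=\mu(N_n(x)\ge1)$, $x\in\mathbb{N}$, is non-increasing in $x$.
   Context: $\mu$ is the Gauss measure on $(0,1)$, $d\mu(\omega)=\frac{d\omega}{(\log 2)(1+\omega)}$. For irrational $\omega\in(0,1)$, $a_i(\omega)$ denote its continued fraction partial quotients, and $N_n(x)=N_n(x,\omega)=\#\{1\le i\le n: a_i(\omega)=x\}$. *)

theory Defs
  imports "HOL-Analysis.Analysis"
begin

definition gauss_measure :: "real measure" where
  "gauss_measure = density lborel
     (\<lambda>w. ennreal (indicator {0<..<1} w / (ln 2 * (1 + w))))"

definition gauss_map :: "real \<Rightarrow> real" where
  "gauss_map w = frac (1 / w)"

definition cf_digit :: "nat \<Rightarrow> real \<Rightarrow> nat" where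
  "cf_digit i w = nat \<lfloor>1 / (gauss_map ^^ (i - 1)) w\<rfloor>"

definition N_count :: "nat \<Rightarrow> nat \<Rightarrow> real \<Rightarrow> nat" where
  "N_count n x w = card {i \<in> {1..n}. cf_digit i w = x}"

end

theory Submission
  imports Defs
begin

definition Om :: "real set" where "Om = {w. 0 < w \<and> w < 1 \<and> w \<notin> \<rat>}"

fun PP :: "nat \<Rightarrow> nat \<Rightarrow> real \<Rightarrow> bool" where
  "PP 0 z w = False"
| "PP (Suc n) z w = (nat \<lfloor>1 / w\<rfloor> = z \<or> PP n z (gauss_map w))"

definition gg :: "real \<Rightarrow> real \<Rightarrow> real \<Rightarrow> real \<Rightarrow> real \<Rightarrow> real" where
  "gg p q r s w = 1 / ((p * w + q) * (r * w + s))"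

lemma gauss_map_meas[measurable]: "gauss_map \<in> borel_measurable borel"
  unfolding gauss_map_def frac_def by measurable

lemma PP_meas[measurable]: "{w. PP n z w} \<in> sets borel"
proof (induction n)
  case 0 then show ?case by simp
next
  case (Suc n)
  have "{w. PP (Suc n) z w} = {w. nat \<lfloor>1 / w\<rfloor> = z} \<union> gauss_map -` {w. PP n z w}"
    by auto
  moreover have "{w::real. nat \<lfloor>1 / w\<rfloor> = z} \<in> sets borel" by measurable
  moreover have "gauss_map -` {w. PP n z w} \<in> sets borel"
    using measurable_sets_borel[OF gauss_map_meas Suc] by simp
  ultimately show ?case by simp
qed

lemma Om_meas[measurable]: "Om \<in> sets borel"
proof -
  have "\<rat> \<in> sets (borel :: real measure)"
    by (rule sets.countable) (auto simp: countable_rat)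
  then have "{0<..<1} \<inter> (- \<rat>) \<in> sets (borel :: real measure)" by auto
  moreover have "Om = {0<..<1} \<inter> (- \<rat>)" unfolding Om_def by auto
  ultimately show ?thesis by simp
qed

lemma cf_digit_Suc: "i \<ge> 1 \<Longrightarrow> cf_digit (Suc i) w = cf_digit i (gauss_map w)"
  unfolding cf_digit_def
  by (metis Suc_diff_le diff_Suc_1 funpow_Suc_right o_apply)

lemma cf_digit_1: "cf_digit 1 w = nat \<lfloor>1 / w\<rfloor>"
  unfolding cf_digit_def by simp

lemma PP_iff: "PP n z w \<longleftrightarrow> (\<exists>i\<in>{1..n}. cf_digit i w = z)"
proof (induction n arbitrary: w)
  case 0 then show ?case by simp
next
  case (Suc n)
  have "(\<exists>i\<in>{1..Suc n}. cf_digit i w = z) \<longleftrightarrow>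
        (cf_digit 1 w = z \<or> (\<exists>i\<in>{1..n}. cf_digit (Suc i) w = z))"
  proof
    assume "\<exists>i\<in>{1..Suc n}. cf_digit i w = z"
    then obtain i where i: "1 \<le> i" "i \<le> Suc n" "cf_digit i w = z" by auto
    show "cf_digit 1 w = z \<or> (\<exists>i\<in>{1..n}. cf_digit (Suc i) w = z)"
    proof (cases "i = 1")
      case True then show ?thesis using i by simp
    next
      case False
      then have "i - 1 \<in> {1..n}" "Suc (i-1) = i" using i by auto
      then show ?thesis using i by metis
    qed
  next
    assume h: "cf_digit 1 w = z \<or> (\<exists>i\<in>{1..n}. cf_digit (Suc i) w = z)"
    show "\<exists>i\<in>{1..Suc n}. cf_digit i w = z"
    proof (cases "cf_digit 1 w = z")
      case True then show ?thesis by force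
    next
      case False
      then obtain i where "i \<in> {1..n}" "cf_digit (Suc i) w = z" using h by auto
      then show ?thesis by (intro bexI[of _ "Suc i"]) auto
    qed
  qed
  then show ?case using Suc cf_digit_Suc cf_digit_1 by auto
qed

lemma dtest: "B \<ge> 1 \<Longrightarrow> x \<in> {0..1} \<Longrightarrow> ((\<lambda>s. 1 / (B + 1 - s)) has_real_derivative 1 / (B + 1 - x)\<^sup>2) (at x)"
  for B x :: real
  by (rule derivative_eq_intros refl | simp)+ (simp add: power2_eq_square)

lemma ctest: "B \<ge> 1 \<Longrightarrow> continuous_on {0..1} (\<lambda>s. 1 / (B + 1 - s)\<^sup>2)" for B :: real
  by (intro continuous_intros) auto

lemma piece:
  fixes F :: "real \<Rightarrow> real" and B :: real
  assumes B: "B \<ge> 1" and Fm[measurable]: "F \<in> borel_measurable borel" and F0: "\<And>w. F w \<ge> 0"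
  shows "(\<integral>\<^sup>+ w. ennreal (F w * indicator {1/(B+1)..1/B} w) \<partial>lborel)
       = (\<integral>\<^sup>+ t. ennreal (F (1/(B+t)) / (B+t)^2 * indicator {0..1} t) \<partial>lborel)"
proof -
  have m: "set_borel_measurable borel {1 / (B + 1 - 0)..1 / (B + 1 - 1)} F"
    unfolding set_borel_measurable_def by measurable
  have 1: "(\<integral>\<^sup>+ w. ennreal (F w * indicator {(\<lambda>s. 1/(B+1-s)) 0..(\<lambda>s. 1/(B+1-s)) 1} w) \<partial>lborel)
      = (\<integral>\<^sup>+ s. ennreal (F ((\<lambda>s. 1/(B+1-s)) s) * (\<lambda>s. 1/(B+1-s)^2) s * indicator {0..1} s) \<partial>lborel)"
    by (rule nn_integral_substitution[OF m dtest[OF B] ctest[OF B]]) simp_all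
  have 2: "(\<integral>\<^sup>+ s. ennreal (F ((\<lambda>s. 1/(B+1-s)) s) * (\<lambda>s. 1/(B+1-s)^2) s * indicator {0..1} s) \<partial>lborel) = ennreal \<bar>-1\<bar> * (\<integral>\<^sup>+ t. ennreal (F (1/(B+1-(1 + (-1)*t))) * (1/(B+1-(1 + (-1)*t))^2) * indicator {0..1} (1 + (-1)*t)) \<partial>lborel)"
    by (rule nn_integral_real_affine) simp_all
  have 3: "ennreal \<bar>-1\<bar> * (\<integral>\<^sup>+ t. ennreal (F (1/(B+1-(1 + (-1)*t))) * (1/(B+1-(1 + (-1)*t))^2) * indicator {0..1} (1 + (-1)*t)) \<partial>lborel) = (\<integral>\<^sup>+ t. ennreal (F (1/(B+t)) / (B+t)^2 * indicator {0..1} t) \<partial>lborel)"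
  proof -
    have e: "ennreal \<bar>-1\<bar> = 1" by simp
    show ?thesis unfolding e mult_1
      by (intro nn_integral_cong) (simp add: indicator_def algebra_simps)
  qed
  have 4: "(\<lambda>s. 1/(B+1-s)) 0 = 1/(B+1)" "(\<lambda>s. 1/(B+1-s)) 1 = 1/B" by simp_all
  show ?thesis using 1 2 3 unfolding 4 by simp
qed

lemma inv_rat: "(x::real) \<in> \<rat> \<Longrightarrow> 1 / x \<in> \<rat>"
  by (simp add: Rats_divide)

lemma piece_iff:
  assumes w: "w \<in> Om" and k: "k \<ge> 1"
  shows "w \<in> {1/(real k+1)..1/real k} \<longleftrightarrow> nat \<lfloor>1/w\<rfloor> = k"
proof -
  have w0: "w > 0" "w < 1" and wq: "w \<notin> \<rat>" using w by (auto simp: Om_def)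
  have iq: "1/w \<notin> \<rat>" using inv_rat[of "1/w"] wq by auto
  have ne1: "1/w \<noteq> real k" using iq Rats_of_nat by metis
  have ne2: "1/w \<noteq> real k + 1" using iq Rats_of_nat[of "Suc k"] by auto
  have k0: "real k > 0" using k by simp
  have "w \<le> 1/real k \<longleftrightarrow> real k \<le> 1/w" using w0 k0 by (simp add: field_simps)
  moreover have "1/(real k+1) \<le> w \<longleftrightarrow> 1/w \<le> real k + 1" using w0 k0 by (simp add: field_simps)
  ultimately have "w \<in> {1/(real k+1)..1/real k} \<longleftrightarrow> real k < 1/w \<and> 1/w < real k + 1"
    using ne1 ne2 by auto
  also have "\<dots> \<longleftrightarrow> \<lfloor>1/w\<rfloor> = int k"
    using ne1 by (auto simp: floor_eq_iff)
  also have "\<dots> \<longleftrightarrow> nat \<lfloor>1/w\<rfloor> = k" using k by auto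
  finally show ?thesis .
qed

lemma decomp:
  fixes F :: "real \<Rightarrow> real"
  assumes Fm[measurable]: "F \<in> borel_measurable borel" and F0: "\<And>w. F w \<ge> 0"
    and Fz: "\<And>w. w \<notin> Om \<Longrightarrow> F w = 0"
  shows "(\<integral>\<^sup>+ w. ennreal (F w) \<partial>lborel)
    = (\<Sum>b. \<integral>\<^sup>+ t. ennreal (F (1/(real (Suc b)+t)) / (real (Suc b)+t)^2 * indicator {0..1} t) \<partial>lborel)"
proof -
  have pw: "ennreal (F w) = (\<Sum>b. ennreal (F w * indicator {1/(real (Suc b)+1)..1/real (Suc b)} w))" for w
  proof (cases "w \<in> Om")
    case False then show ?thesis using Fz by simp
  next
    case True
    define m where "m = nat \<lfloor>1/w\<rfloor>"
    have w01: "0 < w" "w < 1" using True by (auto simp: Om_def)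
    then have "1 < 1/w" by (simp add: field_simps)
    then have m1: "m \<ge> 1" unfolding m_def by linarith
    have "(\<lambda>b. ennreal (F w * indicator {1/(real (Suc b)+1)..1/real (Suc b)} w))
        = (\<lambda>b. if b = m - 1 then ennreal (F w) else 0)"
    proof
      fix b
      have "w \<in> {1/(real (Suc b)+1)..1/real (Suc b)} \<longleftrightarrow> Suc b = m"
        using piece_iff[OF True, of "Suc b"] unfolding m_def by auto
      also have "\<dots> \<longleftrightarrow> b = m - 1" using m1 by auto
      finally show "ennreal (F w * indicator {1/(real (Suc b)+1)..1/real (Suc b)} w)
          = (if b = m - 1 then ennreal (F w) else 0)"
        by (simp add: indicator_def)
    qed
    then show ?thesis using sums_unique[OF sums_single[of "m - 1" "\<lambda>_. ennreal (F w)"]] by simp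
  qed
  have "(\<integral>\<^sup>+ w. ennreal (F w) \<partial>lborel)
      = (\<integral>\<^sup>+ w. (\<Sum>b. ennreal (F w * indicator {1/(real (Suc b)+1)..1/real (Suc b)} w)) \<partial>lborel)"
    by (rule nn_integral_cong) (rule pw)
  also have "\<dots> = (\<Sum>b. \<integral>\<^sup>+ w. ennreal (F w * indicator {1/(real (Suc b)+1)..1/real (Suc b)} w) \<partial>lborel)"
    by (rule nn_integral_suminf) measurable
  also have "\<dots> = (\<Sum>b. \<integral>\<^sup>+ t. ennreal (F (1/(real (Suc b)+t)) / (real (Suc b)+t)^2 * indicator {0..1} t) \<partial>lborel)"
    by (rule arg_cong[where f=suminf], rule ext, rule piece) (auto simp: F0)
  finally show ?thesis .
qed

definition Fn :: "nat \<Rightarrow> nat \<Rightarrow> real \<Rightarrow> real \<Rightarrow> real \<Rightarrow> real \<Rightarrow> real \<Rightarrow> real" where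
  "Fn n z p q r s w = gg p q r s w * indicator Om w * indicator {w. PP n z w} w"

lemma Fn_meas[measurable]: "Fn n z p q r s \<in> borel_measurable borel"
  unfolding Fn_def gg_def by measurable

lemma gg_pos: "0 \<le> p \<Longrightarrow> 0 < q \<Longrightarrow> 0 \<le> r \<Longrightarrow> 0 < s \<Longrightarrow> 0 \<le> w \<Longrightarrow> gg p q r s w > 0"
  unfolding gg_def by (intro divide_pos_pos mult_pos_pos add_nonneg_pos mult_nonneg_nonneg) auto

lemma Fn_nonneg: "0 \<le> p \<Longrightarrow> 0 < q \<Longrightarrow> 0 \<le> r \<Longrightarrow> 0 < s \<Longrightarrow> Fn n z p q r s w \<ge> 0"
  unfolding Fn_def using gg_pos[of p q r s w] by (auto simp: indicator_def Om_def)

lemma Om_pull: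
  fixes t :: real and b :: nat
  assumes "t \<in> {0..1}"
  shows "1/(real (Suc b) + t) \<in> Om \<longleftrightarrow> t \<in> Om"
proof
  let ?u = "real (Suc b) + t"
  have u1: "?u \<ge> 1" using assms by auto
  assume h: "1/?u \<in> Om"
  have "1/?u \<notin> \<rat>" using h by (auto simp: Om_def)
  then have "?u \<notin> \<rat>" using inv_rat by blast
  then have tq: "t \<notin> \<rat>" by (metis Rats_add Rats_of_nat)
  then have "t \<noteq> 0" "t \<noteq> 1" by auto
  then show "t \<in> Om" using assms tq by (auto simp: Om_def)
next
  let ?u = "real (Suc b) + t"
  assume h: "t \<in> Om"
  then have t01: "0 < t" "t < 1" and tq: "t \<notin> \<rat>" by (auto simp: Om_def)
  have u1: "?u > 1" using t01 by auto
  have "?u \<notin> \<rat>" using tq by (metis Rats_diff Rats_of_nat add_diff_cancel_left')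
  then have "1/?u \<notin> \<rat>" using inv_rat[of "1/?u"] u1 by auto
  then show "1/?u \<in> Om" using u1 by (auto simp: Om_def field_simps)
qed

lemma gg_pull:
  assumes "u \<noteq> 0" "p + q*u \<noteq> 0" "r + s*u \<noteq> 0"
  shows "gg p q r s (1/u) / u^2 = 1 / ((p + q*u) * (r + s*u))"
proof -
  have a: "p * (1/u) + q = (p + q*u)/u" "r * (1/u) + s = (r + s*u)/u"
    using assms by (auto simp: field_simps)
  have X: "(p + q*u) * (r + s*u) \<noteq> 0" using assms by simp
  have "gg p q r s (1/u) = u^2 / ((p + q*u) * (r + s*u))"
    unfolding gg_def a using assms X by (simp add: power2_eq_square)
  then show ?thesis using assms X by (simp add: power2_eq_square)
qed

lemma pull:
  fixes b :: nat and t :: real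
  assumes pq: "0 \<le> p" "0 < q" "0 \<le> r" "0 < s"
  defines "B \<equiv> real (Suc b)"
  shows "Fn (Suc n) z p q r s (1/(B+t)) / (B+t)^2 * indicator {0..1} t
    = gg q (p+q*B) s (r+s*B) t * indicator Om t * (if Suc b = z \<or> PP n z t then 1 else 0)"
proof (cases "t \<in> Om")
  case True
  let ?u = "B + t"
  have t01: "0 < t" "t < 1" using True by (auto simp: Om_def)
  have B1: "B \<ge> 1" unfolding B_def by simp
  have u0: "?u > 0" using t01 B1 by simp
  have inO: "1/?u \<in> Om" using Om_pull[of t b] True t01 unfolding B_def by auto
  have fl: "\<lfloor>?u\<rfloor> = int (Suc b)" using t01 unfolding B_def by (simp add: floor_eq_iff)
  have gm: "gauss_map (1/?u) = t" unfolding gauss_map_def frac_def using fl u0 by (simp add: B_def)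
  have nf: "nat \<lfloor>1/(1/?u)\<rfloor> = Suc b" using fl u0 by simp
  have PPe: "PP (Suc n) z (1/?u) \<longleftrightarrow> (Suc b = z \<or> PP n z t)" using gm nf by auto
  have g: "gg p q r s (1/?u) / ?u^2 = gg q (p+q*B) s (r+s*B) t"
  proof -
    have "p + q*?u > 0" "r + s*?u > 0" using pq u0 by (auto intro: add_nonneg_pos)
    then have "gg p q r s (1/?u) / ?u^2 = 1 / ((p + q*?u) * (r + s*?u))"
      using u0 by (intro gg_pull) auto
    also have "\<dots> = gg q (p+q*B) s (r+s*B) t" unfolding gg_def by (simp add: algebra_simps)
    finally show ?thesis .
  qed
  show ?thesis using True inO t01 PPe g unfolding Fn_def by (auto simp: indicator_def)
next
  case False
  then have "t \<in> {0..1} \<Longrightarrow> 1/(B+t) \<notin> Om" using Om_pull[of t b] unfolding B_def by auto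
  then show ?thesis using False unfolding Fn_def by (auto simp: indicator_def)
qed

definition II :: "nat \<Rightarrow> nat \<Rightarrow> real \<Rightarrow> real \<Rightarrow> real \<Rightarrow> real \<Rightarrow> ennreal" where
  "II n z p q r s = (\<integral>\<^sup>+ w. ennreal (Fn n z p q r s w) \<partial>lborel)"

definition KK :: "real \<Rightarrow> real \<Rightarrow> real \<Rightarrow> real \<Rightarrow> ennreal" where
  "KK p q r s = (\<integral>\<^sup>+ w. ennreal (gg p q r s w * indicator Om w) \<partial>lborel)"

lemma II_Suc:
  assumes pq: "0 \<le> p" "0 < q" "0 \<le> r" "0 < s"
  shows "II (Suc n) z p q r s = (\<Sum>b. if Suc b = z
      then KK q (p+q*real (Suc b)) s (r+s*real (Suc b))
      else II n z q (p+q*real (Suc b)) s (r+s*real (Suc b)))"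
proof -
  have "II (Suc n) z p q r s = (\<Sum>b. \<integral>\<^sup>+ t. ennreal (Fn (Suc n) z p q r s (1/(real (Suc b)+t)) / (real (Suc b)+t)^2 * indicator {0..1} t) \<partial>lborel)"
    unfolding II_def
    by (rule decomp[OF Fn_meas Fn_nonneg[OF pq]]) (simp add: Fn_def)
  also have "\<dots> = (\<Sum>b. if Suc b = z
      then KK q (p+q*real (Suc b)) s (r+s*real (Suc b))
      else II n z q (p+q*real (Suc b)) s (r+s*real (Suc b)))"
  proof (rule arg_cong[where f=suminf], rule ext)
    fix b
    show "(\<integral>\<^sup>+ t. ennreal (Fn (Suc n) z p q r s (1/(real (Suc b)+t)) / (real (Suc b)+t)^2 * indicator {0..1} t) \<partial>lborel)
      = (if Suc b = z
      then KK q (p+q*real (Suc b)) s (r+s*real (Suc b))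
      else II n z q (p+q*real (Suc b)) s (r+s*real (Suc b)))"
    proof -
      have "(\<integral>\<^sup>+ t. ennreal (Fn (Suc n) z p q r s (1/(real (Suc b)+t)) / (real (Suc b)+t)^2 * indicator {0..1} t) \<partial>lborel)
        = (\<integral>\<^sup>+ t. ennreal (gg q (p+q*real (Suc b)) s (r+s*real (Suc b)) t * indicator Om t * (if Suc b = z \<or> PP n z t then 1 else 0)) \<partial>lborel)"
        by (rule nn_integral_cong) (simp only: pull[OF pq])
      then show ?thesis
        unfolding KK_def II_def Fn_def
        by (cases "Suc b = z") (auto intro!: nn_integral_cong simp: indicator_def)
    qed
  qed
  finally show ?thesis .
qed

lemma suminf_split2:
  fixes f :: "nat \<Rightarrow> ennreal"
  assumes "i \<noteq> j"
  shows "suminf f = f i + f j + (\<Sum>b. if b = i \<or> b = j then 0 else f b)"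
proof -
  have "suminf f = (\<Sum>b. (if b = i \<or> b = j then f b else 0) + (if b = i \<or> b = j then 0 else f b))"
    by (rule arg_cong[where f=suminf]) auto
  also have "\<dots> = (\<Sum>b. (if b = i \<or> b = j then f b else 0)) + (\<Sum>b. if b = i \<or> b = j then 0 else f b)"
    by (rule suminf_add[symmetric]) (auto intro: summableI)
  also have "(\<Sum>b. (if b = i \<or> b = j then f b else 0)) = (\<Sum>b\<in>{i,j}. (if b = i \<or> b = j then f b else 0))"
    by (rule suminf_finite) auto
  also have "\<dots> = f i + f j" using assms by simp
  finally show ?thesis .
qed

lemma gg_mono:
  assumes pq: "0 \<le> p" "0 < q" "0 \<le> r" "0 < s" and B: "0 < B1" "B1 \<le> B2" and t: "0 \<le> t"
  shows "gg q (p+q*B2) s (r+s*B2) t \<le> gg q (p+q*B1) s (r+s*B1) t"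
proof -
  have "0 < q*B1" "0 < s*B1" using pq B by auto
  moreover have "0 \<le> q*t" "0 \<le> s*t" using pq t by auto
  ultimately have a1: "0 < q*t + (p+q*B1)" "0 < s*t + (r+s*B1)"
    using pq by linarith+
  have "q*B1 \<le> q*B2" "s*B1 \<le> s*B2" using pq B by (auto intro: mult_left_mono)
  then have a2: "q*t + (p+q*B1) \<le> q*t + (p+q*B2)" "s*t + (r+s*B1) \<le> s*t + (r+s*B2)" by auto
  have "(q*t + (p+q*B1)) * (s*t + (r+s*B1)) \<le> (q*t + (p+q*B2)) * (s*t + (r+s*B2))"
    using a1 a2 by (intro mult_mono) auto
  moreover have "0 < (q*t + (p+q*B1)) * (s*t + (r+s*B1))" using a1 by simp
  ultimately show ?thesis unfolding gg_def by (intro divide_left_mono) auto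
qed

lemma swap_ineq:
  assumes pq: "0 \<le> p" "0 < q" "0 \<le> r" "0 < s" and B: "0 < B1" "B1 \<le> B2"
  shows "II n x q (p+q*B1) s (r+s*B1) + KK q (p+q*B2) s (r+s*B2)
     \<le> KK q (p+q*B1) s (r+s*B1) + II n x q (p+q*B2) s (r+s*B2)"
proof -
  let ?g1 = "gg q (p+q*B1) s (r+s*B1)" and ?g2 = "gg q (p+q*B2) s (r+s*B2)"
  have pq1: "0 \<le> q" "0 < p+q*B1" "0 \<le> s" "0 < r+s*B1" and pq2: "0 \<le> q" "0 < p+q*B2" "0 \<le> s" "0 < r+s*B2"
  proof -
    have "0 < q*B1" "0 < s*B1" "0 < q*B2" "0 < s*B2" using pq B by auto
    then show "0 \<le> q" "0 < p+q*B1" "0 \<le> s" "0 < r+s*B1" "0 \<le> q" "0 < p+q*B2" "0 \<le> s" "0 < r+s*B2"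
      using pq by linarith+
  qed
  have pw: "ennreal (Fn n x q (p+q*B1) s (r+s*B1) w) + ennreal (?g2 w * indicator Om w)
     \<le> ennreal (?g1 w * indicator Om w) + ennreal (Fn n x q (p+q*B2) s (r+s*B2) w)" for w
  proof (cases "w \<in> Om")
    case True
    then have w0: "0 \<le> w" by (auto simp: Om_def)
    have m: "?g2 w \<le> ?g1 w" using gg_mono[OF pq B w0] .
    have p1: "?g1 w > 0" "?g2 w > 0" using gg_pos[OF pq1 w0] gg_pos[OF pq2 w0] by auto
    show ?thesis
    proof (cases "PP n x w")
      case True then show ?thesis using `w \<in> Om` p1 by (simp add: Fn_def add.commute)
    next
      case False then show ?thesis using `w \<in> Om` p1 m by (simp add: Fn_def ennreal_leI)
    qed
  next
    case False then show ?thesis by (simp add: Fn_def)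
  qed
  have "II n x q (p+q*B1) s (r+s*B1) + KK q (p+q*B2) s (r+s*B2)
     = (\<integral>\<^sup>+ w. ennreal (Fn n x q (p+q*B1) s (r+s*B1) w) + ennreal (?g2 w * indicator Om w) \<partial>lborel)"
    unfolding II_def KK_def by (rule nn_integral_add[symmetric]) (auto simp: gg_def)
  also have "\<dots> \<le> (\<integral>\<^sup>+ w. ennreal (?g1 w * indicator Om w) + ennreal (Fn n x q (p+q*B2) s (r+s*B2) w) \<partial>lborel)"
    by (rule nn_integral_mono) (rule pw)
  also have "\<dots> = KK q (p+q*B1) s (r+s*B1) + II n x q (p+q*B2) s (r+s*B2)"
    unfolding II_def KK_def by (rule nn_integral_add) (auto simp: gg_def)
  finally show ?thesis .
qed

lemma core:
  assumes xy: "1 \<le> x" "x \<le> y"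
  shows "0 \<le> p \<Longrightarrow> 0 < q \<Longrightarrow> 0 \<le> r \<Longrightarrow> 0 < s \<Longrightarrow> II n y p q r s \<le> II n x p q r s"
proof (induction n arbitrary: p q r s)
  case 0
  then show ?case by (simp add: II_def Fn_def)
next
  case (Suc n)
  have pq: "0 \<le> p" "0 < q" "0 \<le> r" "0 < s" by fact+
  define P1 where "P1 b = p+q*real (Suc b)" for b
  define P2 where "P2 b = r+s*real (Suc b)" for b
  have pqb: "0 \<le> q" "0 < P1 b" "0 \<le> s" "0 < P2 b" for b
    using pq unfolding P1_def P2_def by (auto intro!: add_nonneg_pos)
  define A where "A z b = (if Suc b = z then KK q (P1 b) s (P2 b) else II n z q (P1 b) s (P2 b))" for z b
  define L where "L b = (if Suc b = y then KK q (P1 b) s (P2 b) else II n x q (P1 b) s (P2 b))" for b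
  have ey: "II (Suc n) y p q r s = suminf (A y)" unfolding A_def P1_def P2_def using II_Suc[OF pq] by simp
  have ex: "II (Suc n) x p q r s = suminf (A x)" unfolding A_def P1_def P2_def using II_Suc[OF pq] by simp
  have "suminf (A y) \<le> suminf L"
    by (rule suminf_le) (auto simp: A_def L_def intro: summableI Suc.IH[OF pqb])
  also have "suminf L \<le> suminf (A x)"
  proof (cases "x = y")
    case True then show ?thesis unfolding A_def L_def by simp
  next
    case False
    define i where "i = x - 1"
    define j where "j = y - 1"
    have ij: "i \<noteq> j" "Suc i = x" "Suc j = y" using xy False unfolding i_def j_def by auto
    have R: "(\<Sum>b. if b = i \<or> b = j then 0 else L b) = (\<Sum>b. if b = i \<or> b = j then 0 else A x b)"
      by (rule arg_cong[where f=suminf]) (auto simp: A_def L_def ij(2,3)[symmetric])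
    have "L i + L j \<le> A x i + A x j"
    proof -
      have "L i + L j = II n x q (P1 i) s (P2 i) + KK q (P1 j) s (P2 j)"
        unfolding L_def using ij by auto
      also have "\<dots> \<le> KK q (P1 i) s (P2 i) + II n x q (P1 j) s (P2 j)"
        unfolding P1_def P2_def using ij xy
        by (intro swap_ineq[OF pq]) auto
      also have "\<dots> = A x i + A x j" unfolding A_def using ij by auto
      finally show ?thesis .
    qed
    then show ?thesis
      unfolding suminf_split2[OF ij(1), of L] suminf_split2[OF ij(1), of "A x"] R
      by (intro add_right_mono)
  qed
  finally show ?case using ex ey by simp
qed

lemma set_eq:
  "{w \<in> {0<..<1}. w \<notin> \<rat> \<and> N_count n z w \<ge> 1} = Om \<inter> {w. PP n z w}"
proof -
  have "N_count n z w \<ge> 1 \<longleftrightarrow> PP n z w" for w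
  proof -
    have "N_count n z w \<ge> 1 \<longleftrightarrow> {i \<in> {1..n}. cf_digit i w = z} \<noteq> {}"
      unfolding N_count_def by (auto simp: Suc_le_eq card_gt_0_iff)
    also have "\<dots> \<longleftrightarrow> PP n z w" unfolding PP_iff by auto
    finally show ?thesis .
  qed
  then show ?thesis unfolding Om_def by auto
qed

lemma emeasure_eq:
  "emeasure gauss_measure {w \<in> {0<..<1}. w \<notin> \<rat> \<and> N_count n z w \<ge> 1} = II n z 0 (ln 2) 1 1"
proof -
  have S: "Om \<inter> {w. PP n z w} \<in> sets lborel" by simp
  have "emeasure gauss_measure (Om \<inter> {w. PP n z w})
      = (\<integral>\<^sup>+ w. ennreal (indicator {0<..<1} w / (ln 2 * (1 + w))) * indicator (Om \<inter> {w. PP n z w}) w \<partial>lborel)"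
    unfolding gauss_measure_def by (rule emeasure_density[OF _ S]) measurable
  also have "\<dots> = II n z 0 (ln 2) 1 1"
    unfolding II_def Fn_def gg_def
    by (rule nn_integral_cong) (auto simp: indicator_def Om_def algebra_simps)
  finally show ?thesis unfolding set_eq .
qed

lemma Fn_bound: "ennreal (Fn n z 0 (ln 2) 1 1 w) \<le> ennreal (1 / ln 2 * indicator {0<..<1} w)"
proof (cases "w \<in> Om")
  case True
  then have w: "0 < w" "w < 1" by (auto simp: Om_def)
  have l: "ln (2::real) > 0" by simp
  have "0 \<le> ln 2 * w" using w l by simp
  then have d: "ln 2 \<le> (0*w + ln 2) * (1*w+1)" by (simp add: algebra_simps)
  have "gg 0 (ln 2) 1 1 w \<le> 1 / ln 2" unfolding gg_def
    using d l by (intro divide_left_mono) auto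
  then have "Fn n z 0 (ln 2) 1 1 w \<le> 1 / ln 2" unfolding Fn_def using l
    by (auto simp: indicator_def)
  then show ?thesis using w by (auto simp: indicator_def intro: ennreal_leI)
next
  case False then show ?thesis by (simp add: Fn_def)
qed

lemma II_fin: "II n z 0 (ln 2) 1 1 < top"
proof -
  have "II n z 0 (ln 2) 1 1 \<le> (\<integral>\<^sup>+ w. ennreal (1 / ln 2 * indicator {0<..<1} (w::real)) \<partial>lborel)"
    unfolding II_def by (rule nn_integral_mono) (rule Fn_bound)
  also have "\<dots> = (\<integral>\<^sup>+ w. ennreal (1 / ln 2) * indicator {0<..<1} (w::real) \<partial>lborel)"
    by (rule nn_integral_cong) (simp add: indicator_def)
  also have "\<dots> = ennreal (1 / ln 2) * emeasure lborel {0<..<1::real}"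
    by (rule nn_integral_cmult_indicator) simp
  also have "\<dots> < top" by (simp add: ennreal_mult_less_top)
  finally show ?thesis .
qed

theorem lemma6:
  fixes n x y :: nat
  assumes "n \<ge> 1" and "1 \<le> x" and "x \<le> y"
  shows "measure gauss_measure {w \<in> {0<..<1}. w \<notin> \<rat> \<and> N_count n y w \<ge> 1}
         \<le> measure gauss_measure {w \<in> {0<..<1}. w \<notin> \<rat> \<and> N_count n x w \<ge> 1}"
  unfolding measure_def emeasure_eq
  by (rule enn2real_mono[OF core[OF assms(2,3)] II_fin]) auto

end
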